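(* Let $g=\begin{pmatrix}A&B\\C&D\end{pmatrix}\in SL_{2n+2}(\mathbb{C})$ with $A,B,C,D\in M_{n+1}(\mathbb{C})$ and $\det C\neq0$, acting on $\mathbb{P}^{2n+1}$. Then the pull-back of the volume form $dV$ satisfies $g^*dV=\mu_g^{4(n+1)}\,dV$, where $\mu_g(z)=\dfrac{\|z''\|}{\|Cz'+Dz''\|}$.
   Context: Write points of $\mathbb{P}^{2n+1}$ as $[z':z'']$ with $z'=(z^0,\dots,z^n)$, $z''=(z^{n+1},\dots,z^{2n+1})$; $\|\cdot\|$ is the Euclidean norm. Let $E=\mathbb{P}^{2n+1}\setminus\{z''=0\}$, covered by $U_\alpha=\{z^{n+\alpha}\neq0\}$, $1\leq\alpha\leq n+1$. On $U_\alpha$ use coordinates $\zeta_\alpha^j=z^j/z^{n+\alpha}$ ($0\le j\le n$), $x_\alpha^k=z^{n+k}/z^{n+\alpha}$ for $1\le k<\alpha$ and $x_\alpha^{k-1}=z^{n+k}/z^{n+\alpha}$ for $\alpha<k\le n+1$. Set $d\zeta_\alpha=d\zeta_\alpha^0\wedge\cdots\wedge d\zeta_\alpha^n$, $dx_\alpha=dx_\alpha^1\wedge\cdots\wedge dx_\alpha^n$, $\|x_\alpha\|^2=\sum_{k=1}^n|x_\alpha^k|^2$, and $dV=\sqrt{-1}(1+\|x_\alpha\|^2)^{-2(n+1)}d\zeta_\alpha\wedge\overline{d\zeta_\alpha}\wedge dx_\alpha\wedge\overline{dx_\alpha}$ on $U_\alpha$; these local forms agree on overlaps and define a global volume form $dV$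 on $E$. The identity is understood where both sides are defined. *)

theory Defs
  imports "HOL-Analysis.Analysis" "Jordan_Normal_Form.Determinant"
begin

text \<open>Points of P^(2n+1) are represented by homogeneous coordinate vectors
  z :: nat => complex (entries 0..2n+1 used).  Local coordinates on U_alpha are
  vectors w :: nat => complex with w 0..w n = zeta^0..zeta^n and
  w (n+k) = x^k for 1 <= k <= n.\<close>

definition chart_inv :: "nat \<Rightarrow> nat \<Rightarrow> (nat \<Rightarrow> complex) \<Rightarrow> (nat \<Rightarrow> complex)" where
  "chart_inv n \<alpha> w = (\<lambda>j. if j \<le> n then w j
       else if j = n + \<alpha> then 1
       else if n < j \<and> j < n + \<alpha> then w j
       else if n + \<alpha> < j \<and> j \<le> 2*n+1 then w (j - 1)
       else 0)"

definition chart :: "nat \<Rightarrow> nat \<Rightarrow> (nat \<Rightarrow> complex) \<Rightarrow> (nat \<Rightarrow> complex)" where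
  "chart n \<beta> z = (\<lambda>i. if i \<le> n then z i / z (n + \<beta>)
       else if n < i \<and> i < n + \<beta> then z i / z (n + \<beta>)
       else if n + \<beta> \<le> i \<and> i \<le> 2*n then z (i + 1) / z (n + \<beta>)
       else 0)"

definition lin_act :: "complex mat \<Rightarrow> nat \<Rightarrow> (nat \<Rightarrow> complex) \<Rightarrow> (nat \<Rightarrow> complex)" where
  "lin_act g N z = (\<lambda>i. if i < N then (\<Sum>j<N. g $$ (i, j) * z j) else 0)"

text \<open>Coefficient of dV in the local coordinates of any U_alpha:
  dV = sqrt(-1) * vol_density * dzeta /\ conj dzeta /\ dx /\ conj dx.\<close>
definition vol_density :: "nat \<Rightarrow> (nat \<Rightarrow> complex) \<Rightarrow> real" where
  "vol_density n w = 1 / (1 + (\<Sum>k\<in>{1..n}. (cmod (w (n + k)))\<^sup>2)) ^ (2*(n+1))"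

definition jac_det :: "nat \<Rightarrow> ((nat \<Rightarrow> complex) \<Rightarrow> (nat \<Rightarrow> complex)) \<Rightarrow> (nat \<Rightarrow> complex) \<Rightarrow> complex" where
  "jac_det N F w = det (mat N N (\<lambda>(i, j). deriv (\<lambda>t. F (w(j := t)) i) (w j)))"

definition mu :: "nat \<Rightarrow> complex mat \<Rightarrow> (nat \<Rightarrow> complex) \<Rightarrow> real" where
  "mu n g z =
     sqrt (\<Sum>i\<le>n. (cmod (z (n + 1 + i)))\<^sup>2) /
     sqrt (\<Sum>i\<le>n. (cmod ((\<Sum>j\<le>n. g $$ (n + 1 + i, j) * z j)
                           + (\<Sum>j\<le>n. g $$ (n + 1 + i, n + 1 + j) * z (n + 1 + j))))\<^sup>2)"

end

theory Submission
  imports Defs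
begin

lemma sum_delta1:
  fixes X :: "nat \<Rightarrow> 'a::comm_ring_1"
  assumes "p < M"
  shows "(\<Sum>k = 0..<M. (if k = p then c else 0) * X k) = c * X p"
proof -
  have "(\<Sum>k = 0..<M. (if k = p then c else 0) * X k) = (\<Sum>k = 0..<M. if k = p then c * X k else 0)"
    by (rule sum.cong) auto
  then show ?thesis using assms by (simp add: sum.delta)
qed

lemma sum_delta1r:
  fixes X :: "nat \<Rightarrow> 'a::comm_ring_1"
  assumes "p < M"
  shows "(\<Sum>k = 0..<M. X k * (if k = p then 1 else 0)) = X p"
proof -
  have "(\<Sum>k = 0..<M. X k * (if k = p then 1 else 0)) = (\<Sum>k = 0..<M. if k = p then X k else 0)"
    by (rule sum.cong) auto
  then show ?thesis using assms by (simp add: sum.delta)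
qed

lemma sum_delta2:
  fixes X :: "nat \<Rightarrow> 'a::comm_ring_1"
  assumes "p < M" "q < M"
  shows "(\<Sum>k = 0..<M. ((if k = p then c else 0) - (if k = q then d else 0)) * X k) = c * X p - d * X q"
proof -
  have "(\<Sum>k = 0..<M. ((if k = p then c else 0) - (if k = q then d else 0)) * X k)
     = (\<Sum>k = 0..<M. (if k = p then c * X k else 0) - (if k = q then d * X k else 0))"
    by (rule sum.cong) (auto simp: algebra_simps)
  then show ?thesis using assms by (simp add: sum_subtractf sum.delta)
qed

lemma perm_mat_det:
  fixes \<pi> :: "nat \<Rightarrow> nat"
  assumes pl: "\<forall>l<M. \<pi> l < M" and pi: "inj_on \<pi> {..<M}"
  shows "cmod (det (mat M M (\<lambda>(l,k). if k = \<pi> l then 1 else (0::complex)))) = 1"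
proof -
  define T where "T = mat M M (\<lambda>(l,k). if k = \<pi> l then 1 else (0::complex))"
  have Tc: "T \<in> carrier_mat M M" by (simp add: T_def)
  have "T * transpose_mat T = 1\<^sub>m M"
  proof (rule eq_matI)
    fix i j assume ij: "i < dim_row (1\<^sub>m M)" "j < dim_col (1\<^sub>m M)"
    then have i: "i<M" and j: "j<M" by auto
    have "(T * transpose_mat T) $$ (i,j) = (\<Sum>k = 0..<M. (if k = \<pi> i then 1 else 0) * (if k = \<pi> j then 1 else 0))"
      using i j by (simp add: T_def scalar_prod_def)
    also have "\<dots> = (if \<pi> j = \<pi> i then 1 else 0)"
      using sum_delta1[of "\<pi> i" M 1 "\<lambda>k. if k = \<pi> j then 1 else (0::complex)"] pl i by simp
    also have "\<dots> = 1\<^sub>m M $$ (i,j)"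
      using i j pi by (auto simp: inj_on_def)
    finally show "(T * transpose_mat T) $$ (i,j) = 1\<^sub>m M $$ (i,j)" .
  qed (auto simp: T_def)
  then have "det T * det (transpose_mat T) = 1"
    using det_mult[OF Tc, of "transpose_mat T"] Tc by simp
  then have "det T ^ 2 = 1" using det_transpose[OF Tc] by (simp add: power2_eq_square)
  then have "cmod (det T) ^ 2 = 1" by (metis norm_one norm_power)
  then have "cmod (det T) = 1 \<or> cmod (det T) = -1" by (simp add: power2_eq_1_iff)
  then have "cmod (det T) = 1" using norm_ge_zero[of "det T"] by linarith
  then show ?thesis by (simp add: T_def)
qed

lemma upper_det:
  fixes f :: "nat \<times> nat \<Rightarrow> 'a::comm_ring_1"
  assumes "\<And>i j. j < i \<Longrightarrow> i < M \<Longrightarrow> f (i,j) = 0"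
  shows "det (mat M M f) = (\<Prod>i = 0..<M. f (i,i))"
proof -
  have "upper_triangular (mat M M f)" using assms by (auto simp: upper_triangular_def)
  then have "det (mat M M f) = prod_list (diag_mat (mat M M f))"
    using det_upper_triangular[of "mat M M f" M] by simp
  also have "\<dots> = (\<Prod>i = 0..<M. f (i,i))" by (simp add: prod_list_diag_prod)
  finally show ?thesis .
qed

lemma reidx:
  fixes f :: "nat \<Rightarrow> 'a::comm_monoid_add"
  assumes c: "c \<in> {1..n+1}"
  shows "(\<Sum>i\<le>n. f (n+1+i)) = f (n+c) + (\<Sum>k\<in>{1..n}. f (if n+k < n+c then n+k else n+k+1))"
proof -
  have "(\<Sum>i\<le>n. f (n+1+i)) = (\<Sum>m\<in>{n+1..2*n+1}. f m)"
    by (rule sum.reindex_bij_witness[where i="\<lambda>m. m - (n+1)" and j="\<lambda>i. n+1+i"]) auto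
  also have "\<dots> = f (n+c) + (\<Sum>m\<in>{n+1..2*n+1}-{n+c}. f m)"
    using c by (subst sum.remove[of _ "n+c"]) auto
  also have "(\<Sum>m\<in>{n+1..2*n+1}-{n+c}. f m) = (\<Sum>k\<in>{1..n}. f (if n+k < n+c then n+k else n+k+1))"
    by (rule sum.reindex_bij_witness[where i="\<lambda>k. if n+k < n+c then n+k else n+k+1"
          and j="\<lambda>m. if m < n+c then m-n else m-n-1"]) (use c in auto)
  finally show ?thesis .
qed

lemma split_sum:
  fixes h :: "nat \<Rightarrow> 'a::comm_monoid_add"
  shows "(\<Sum>l<2*n+2. h l) = (\<Sum>j\<le>n. h j) + (\<Sum>j\<le>n. h (n+1+j))"
proof -
  have "{..<2*n+2} = {..n} \<union> {n+1..2*n+1}" by auto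
  then have "(\<Sum>l<2*n+2. h l) = (\<Sum>j\<le>n. h j) + (\<Sum>m\<in>{n+1..2*n+1}. h m)"
    by (simp add: sum.union_disjoint)
  also have "(\<Sum>m\<in>{n+1..2*n+1}. h m) = (\<Sum>j\<le>n. h (n+1+j))"
    by (rule sum.reindex_bij_witness[where j="\<lambda>m. m - (n+1)" and i="\<lambda>i. n+1+i"]) auto
  finally show ?thesis .
qed

lemma core:
  fixes g :: "complex mat" and N a b :: nat and \<sigma> \<tau> :: "nat \<Rightarrow> nat" and z y :: "nat \<Rightarrow> complex"
  assumes g: "g \<in> carrier_mat (Suc N) (Suc N)" and dg: "det g = 1"
   and sl: "\<forall>i<N. \<sigma> i < Suc N" and si: "inj_on \<sigma> {..<N}" and sb: "\<forall>i<N. \<sigma> i \<noteq> b" and b: "b < Suc N"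
   and tl: "\<forall>i<N. \<tau> i < Suc N" and ti: "inj_on \<tau> {..<N}" and ta: "\<forall>i<N. \<tau> i \<noteq> a" and a: "a < Suc N"
   and za: "z a = 1"
   and y: "\<And>k. k < Suc N \<Longrightarrow> y k = (\<Sum>m = 0..<Suc N. g $$ (k,m) * z m)"
   and yb: "y b \<noteq> 0"
  shows "cmod (det (mat N N (\<lambda>(i,j). (g $$ (\<sigma> i, \<tau> j) * y b - y (\<sigma> i) * g $$ (b, \<tau> j)) / (y b)^2)))
       = 1 / cmod (y b) ^ Suc N"
proof -
  define M where "M = Suc N"
  define Jm where "Jm = mat N N (\<lambda>(i,j). (g $$ (\<sigma> i, \<tau> j) * y b - y (\<sigma> i) * g $$ (b, \<tau> j)) / (y b)^2)"
  define \<pi> where "\<pi> = (\<lambda>l. if l < N then \<sigma> l else b)"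
  define \<pi>' where "\<pi>' = (\<lambda>l. if l < N then \<tau> l else a)"
  define cc where "cc = (\<lambda>i. if i < N then 1 / y b else 1)"
  define dd where "dd = (\<lambda>i. if i < N then y (\<sigma> i) / (y b)^2 else 0)"
  define Q where "Q = mat M M (\<lambda>(i,k). (if k = \<pi> i then cc i else 0) - (if k = b then dd i else 0))"
  define K where "K = mat M M (\<lambda>(k,j). if j < N then (if k = \<tau> j then 1 else 0) else z k)"
  define T where "T = mat M M (\<lambda>(l,k). if k = \<pi> l then 1 else (0::complex))"
  define T' where "T' = mat M M (\<lambda>(l,k). if k = \<pi>' l then 1 else (0::complex))"
  define R where "R = mat 1 N (\<lambda>(_,j). g $$ (b, \<tau> j))"
  define E where "E = four_block_mat Jm (0\<^sub>m N 1) R (mat 1 1 (\<lambda>_. y b))"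
  have gM: "g \<in> carrier_mat M M" using g by (simp add: M_def)
  have Qc: "Q \<in> carrier_mat M M" and Kc: "K \<in> carrier_mat M M" and Tc: "T \<in> carrier_mat M M"
    and T'c: "T' \<in> carrier_mat M M" by (auto simp: Q_def K_def T_def T'_def)
  have pl: "\<forall>l<M. \<pi> l < M" using sl b by (auto simp: \<pi>_def M_def)
  have pi: "inj_on \<pi> {..<M}" using si sb unfolding inj_on_def \<pi>_def M_def
    by (metis lessThan_iff less_SucE)
  have pl': "\<forall>l<M. \<pi>' l < M" using tl a by (auto simp: \<pi>'_def M_def)
  have pi': "inj_on \<pi>' {..<M}" using ti ta unfolding inj_on_def \<pi>'_def M_def
    by (metis lessThan_iff less_SucE)
  have dT: "cmod (det T) = 1" unfolding T_def by (rule perm_mat_det[OF pl pi])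
  have dT': "cmod (det T') = 1" unfolding T'_def by (rule perm_mat_det[OF pl' pi'])
  have gK: "(g * K) $$ (k,j) = (if j < N then g $$ (k, \<tau> j) else y k)" if "k < M" "j < M" for k j
  proof -
    have "(g * K) $$ (k,j) = (\<Sum>m = 0..<M. g $$ (k,m) * K $$ (m,j))"
      using that gM Kc by (simp add: scalar_prod_def)
    also have "\<dots> = (if j < N then g $$ (k, \<tau> j) else y k)"
    proof (cases "j < N")
      case True
      have "(\<Sum>m = 0..<M. g $$ (k,m) * K $$ (m,j)) = (\<Sum>m = 0..<M. g $$ (k,m) * (if m = \<tau> j then 1 else 0))"
        by (rule sum.cong) (use True that in \<open>auto simp: K_def M_def\<close>)
      also have "\<dots> = g $$ (k, \<tau> j)" by (rule sum_delta1r) (use True tl in \<open>auto simp: M_def\<close>)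
      finally show ?thesis using True by simp
    next
      case False
      have "(\<Sum>m = 0..<M. g $$ (k,m) * K $$ (m,j)) = (\<Sum>m = 0..<M. g $$ (k,m) * z m)"
        by (rule sum.cong) (use False that in \<open>auto simp: K_def M_def\<close>)
      also have "\<dots> = y k" using y that by (simp add: M_def)
      finally show ?thesis using False by simp
    qed
    finally show ?thesis .
  qed
  have EQ: "E = Q * (g * K)"
  proof (rule eq_matI)
    fix i j assume ij: "i < dim_row (Q * (g * K))" "j < dim_col (Q * (g * K))"
    then have i: "i < M" and j: "j < M" using Qc Kc by auto
    have "(Q * (g * K)) $$ (i,j) = (\<Sum>k = 0..<M. Q $$ (i,k) * (g * K) $$ (k,j))"
      using i j gM Qc Kc by (simp add: scalar_prod_def)
    also have "\<dots> = (\<Sum>k = 0..<M. ((if k = \<pi> i then cc i else 0) - (if k = b then dd i else 0)) * (g * K) $$ (k,j))"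
      by (rule sum.cong) (use i in \<open>auto simp: Q_def\<close>)
    also have "\<dots> = cc i * (g * K) $$ (\<pi> i, j) - dd i * (g * K) $$ (b, j)"
      by (rule sum_delta2) (use pl i b in \<open>auto simp: M_def\<close>)
    also have "\<dots> = E $$ (i,j)"
    proof -
      have pib: "\<pi> i < M" using pl i by auto
      have bM: "b < M" using b by (simp add: M_def)
      show ?thesis
      proof (cases "i < N")
        case iN: True
        show ?thesis
        proof (cases "j < N")
          case True
          then show ?thesis using iN i j yb gK[OF pib j] gK[OF bM j]
            by (simp add: E_def Jm_def cc_def dd_def \<pi>_def M_def R_def field_simps power2_eq_square)
        next
          case False
          then have jN: "j = N" using j by (simp add: M_def)
          show ?thesis using iN i jN yb gK[OF pib j] gK[OF bM j]
            by (simp add: E_def Jm_def cc_def dd_def \<pi>_def M_def R_def field_simps power2_eq_square)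
        qed
      next
        case False
        then have iN: "i = N" using i by (simp add: M_def)
        show ?thesis
        proof (cases "j < N")
          case True
          then show ?thesis using iN i j yb gK[OF pib j] gK[OF bM j]
            by (simp add: E_def Jm_def cc_def dd_def \<pi>_def M_def R_def)
        next
          case False
          then have jN: "j = N" using j by (simp add: M_def)
          show ?thesis using iN i jN yb gK[OF pib j] gK[OF bM j]
            by (simp add: E_def Jm_def cc_def dd_def \<pi>_def M_def R_def)
        qed
      qed
    qed
    finally show "E $$ (i,j) = (Q * (g * K)) $$ (i,j)" by simp
  qed (use Qc Kc in \<open>auto simp: E_def Jm_def R_def M_def\<close>)
  have dE: "det E = det Jm * y b"
    unfolding E_def
    by (subst det_four_block_mat_upper_right_zero_col[of _ N]) (auto simp: Jm_def R_def det_single)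
  have dE2: "det E = det Q * det K"
    using EQ det_mult[OF Qc, of "g*K"] det_mult[OF gM Kc] dg gM Kc by simp
  have QT: "Q * transpose_mat T = mat M M (\<lambda>(i,l). (if l = i then cc i else 0) - (if l = N then dd i else 0))"
  proof (rule eq_matI)
    fix i l assume "i < dim_row (mat M M (\<lambda>(i,l). (if l = i then cc i else 0) - (if l = N then dd i else (0::complex))))"
      "l < dim_col (mat M M (\<lambda>(i,l). (if l = i then cc i else 0) - (if l = N then dd i else (0::complex))))"
    then have i: "i < M" and l: "l < M" by auto
    have "(Q * transpose_mat T) $$ (i,l) = (\<Sum>k = 0..<M. Q $$ (i,k) * (if k = \<pi> l then 1 else 0))"
      using i l Qc Tc by (simp add: scalar_prod_def T_def)
    also have "\<dots> = Q $$ (i, \<pi> l)" by (rule sum_delta1r) (use pl l in auto)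
    also have "\<dots> = (if \<pi> l = \<pi> i then cc i else 0) - (if \<pi> l = b then dd i else 0)"
      using i pl l by (simp add: Q_def)
    also have "\<dots> = (if l = i then cc i else 0) - (if l = N then dd i else 0)"
    proof -
      have "(\<pi> l = \<pi> i) = (l = i)" using pi i l by (auto simp: inj_on_def)
      moreover have "(\<pi> l = b) = (l = N)" using l sb by (auto simp: \<pi>_def M_def)
      ultimately show ?thesis by simp
    qed
    finally show "(Q * transpose_mat T) $$ (i,l) = mat M M (\<lambda>(i,l). (if l = i then cc i else 0) - (if l = N then dd i else 0)) $$ (i,l)"
      using i l by simp
  qed (use Qc Tc in auto)
  have "det (Q * transpose_mat T) = (\<Prod>i = 0..<M. (\<lambda>(i,l). (if l = i then cc i else 0) - (if l = N then dd i else 0)) (i,i))"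
    unfolding QT by (rule upper_det) (auto simp: M_def)
  also have "\<dots> = (\<Prod>i = 0..<M. cc i)" by (rule prod.cong) (auto simp: dd_def)
  also have "\<dots> = (1 / y b) ^ N" unfolding M_def cc_def by (simp add: prod.atLeast0_lessThan_Suc)
  finally have "det Q * det T = (1 / y b) ^ N"
    using det_mult[OF Qc, of "transpose_mat T"] Tc det_transpose[OF Tc] by simp
  then have cQ: "cmod (det Q) = 1 / cmod (y b) ^ N"
    using dT by (metis mult.right_neutral norm_divide norm_mult norm_one norm_power power_one_over)
  have TK: "T' * K = mat M M (\<lambda>(l,j). if j < N then (if \<pi>' l = \<tau> j then 1 else 0) else z (\<pi>' l))"
  proof (rule eq_matI)
    fix l j assume "l < dim_row (mat M M (\<lambda>(l,j). if j < N then (if \<pi>' l = \<tau> j then 1 else 0) else z (\<pi>' l)))"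
      "j < dim_col (mat M M (\<lambda>(l,j). if j < N then (if \<pi>' l = \<tau> j then 1 else 0) else z (\<pi>' l)))"
    then have l: "l < M" and j: "j < M" by auto
    have "(T' * K) $$ (l,j) = (\<Sum>k = 0..<M. (if k = \<pi>' l then 1 else 0) * K $$ (k,j))"
      using l j T'c Kc by (simp add: scalar_prod_def T'_def)
    also have "\<dots> = K $$ (\<pi>' l, j)" by (rule sum_delta1[where c=1, simplified]) (use pl' l in auto)
    finally show "(T' * K) $$ (l,j) = mat M M (\<lambda>(l,j). if j < N then (if \<pi>' l = \<tau> j then 1 else 0) else z (\<pi>' l)) $$ (l,j)"
      using l j pl' by (simp add: K_def)
  qed (use T'c Kc in auto)
  have "det (T' * K) = (\<Prod>i = 0..<M. (\<lambda>(l,j). if j < N then (if \<pi>' l = \<tau> j then 1 else 0) else z (\<pi>' l)) (i,i))"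
    unfolding TK
  proof (rule upper_det)
    fix i j assume ji: "j < i" "i < M"
    then have jN: "j < N" by (simp add: M_def)
    have "\<pi>' i \<noteq> \<tau> j"
    proof (cases "i < N")
      case True
      have "\<tau> i \<noteq> \<tau> j"
      proof
        assume "\<tau> i = \<tau> j"
        then have "i = j" using inj_onD[OF ti] True jN by blast
        then show False using ji by simp
      qed
      then show ?thesis using True by (simp add: \<pi>'_def)
    next
      case False then show ?thesis using ta jN by (auto simp: \<pi>'_def)
    qed
    then show "(\<lambda>(l,j). if j < N then (if \<pi>' l = \<tau> j then 1 else 0) else z (\<pi>' l)) (i,j) = 0"
      using jN by simp
  qed
  also have "\<dots> = 1" by (rule prod.neutral) (auto simp: \<pi>'_def za M_def)
  finally have "det T' * det K = 1" using det_mult[OF T'c Kc] by simp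
  then have cK: "cmod (det K) = 1" using dT' by (metis mult_cancel_right1 norm_mult norm_one)
  have "cmod (det Jm) * cmod (y b) = 1 / cmod (y b) ^ N"
    using dE dE2 cQ cK by (metis mult.right_neutral norm_mult)
  then have "cmod (det Jm) = 1 / cmod (y b) ^ Suc N"
    using yb by (simp add: field_simps)
  then show ?thesis by (simp add: Jm_def)
qed


lemma deriv_frac:
  fixes A a B c t0 :: complex
  assumes "B \<noteq> 0"
  shows "deriv (\<lambda>t. (A + a*(t - t0)) / (B + c*(t - t0))) t0 = (a*B - A*c)/B^2"
proof -
  have "((\<lambda>t. (A + a*(t - t0)) / (B + c*(t - t0))) has_field_derivative (a*B - A*c)/B^2) (at t0)"
    by (auto intro!: derivative_eq_intros simp: assms power2_eq_square)
  then show ?thesis by (rule DERIV_imp_deriv)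
qed

lemma chart_eq:
  assumes "i < 2*n+1" "\<beta> \<in> {1..n+1}"
  shows "chart n \<beta> v i = v (if i < n+\<beta> then i else i+1) / v (n+\<beta>)"
  using assms by (auto simp: chart_def)

lemma chart_inv_upd:
  assumes "j < 2*n+1" "\<alpha> \<in> {1..n+1}"
  shows "chart_inv n \<alpha> (w(j:=t)) = (chart_inv n \<alpha> w)((if j < n+\<alpha> then j else j+1) := t)"
  using assms by (auto simp: chart_inv_def fun_eq_iff)

lemma lin_act_upd:
  assumes "k < M" "p < M"
  shows "lin_act g M (z(p:=t)) k = lin_act g M z k + g $$ (k,p) * (t - z p)"
proof -
  have "(\<Sum>l<M. g $$ (k,l) * (z(p:=t)) l) = (\<Sum>l<M. g $$ (k,l) * z l + (if l = p then g $$ (k,l) * (t - z p) else 0))"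
    by (rule sum.cong) (auto simp: algebra_simps)
  also have "\<dots> = (\<Sum>l<M. g $$ (k,l) * z l) + g $$ (k,p) * (t - z p)"
    using assms by (simp add: sum.distrib sum.delta)
  finally show ?thesis using assms by (simp add: lin_act_def)
qed

theorem lemma7p2:
  fixes n :: nat and g :: "complex mat" and \<alpha> \<beta> :: nat and w :: "nat \<Rightarrow> complex"
  assumes "g \<in> carrier_mat (2*n+2) (2*n+2)"
    and "det g = 1"
    and "det (mat (n+1) (n+1) (\<lambda>(i, j). g $$ (n + 1 + i, j))) \<noteq> 0"
    and "\<alpha> \<in> {1..n+1}" and "\<beta> \<in> {1..n+1}"
    and "lin_act g (2*n+2) (chart_inv n \<alpha> w) (n + \<beta>) \<noteq> 0"
  shows "vol_density n (chart n \<beta> (lin_act g (2*n+2) (chart_inv n \<alpha> w)))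
           * (cmod (jac_det (2*n+1) (\<lambda>v. chart n \<beta> (lin_act g (2*n+2) (chart_inv n \<alpha> v))) w))\<^sup>2
         = (mu n g (chart_inv n \<alpha> w)) ^ (4*(n+1)) * vol_density n w"
proof -
  note g = assms(1) and dg = assms(2) and al = assms(4) and be = assms(5)
  define N where "N = 2*n+1"
  define \<sigma> where "\<sigma> = (\<lambda>i::nat. if i < n+\<beta> then i else i+1)"
  define \<tau> where "\<tau> = (\<lambda>i::nat. if i < n+\<alpha> then i else i+1)"
  define z where "z = chart_inv n \<alpha> w"
  define y where "y = lin_act g (2*n+2) z"
  define b where "b = n + \<beta>"
  have yb: "y b \<noteq> 0" using assms(6) by (simp add: y_def z_def b_def)
  have bM: "b < 2*n+2" using be by (simp add: b_def)
  have C1: "chart n \<beta> v i = v (\<sigma> i) / v b" if "i < N" for v i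
    using chart_eq[of i n \<beta> v] that be by (simp add: N_def \<sigma>_def b_def)
  have C2: "chart_inv n \<alpha> (w(j:=t)) = z(\<tau> j := t)" if "j < N" for j t
    using chart_inv_upd[of j n \<alpha> w t] that al by (simp add: N_def \<tau>_def z_def)
  have C3: "z (\<tau> j) = w j" if "j < N" for j
  proof -
    have "z = z(\<tau> j := w j)" using C2[OF that, of "w j"] by (simp add: z_def)
    then show ?thesis by (metis fun_upd_same)
  qed
  have C4: "z (n+\<alpha>) = 1" using al by (simp add: z_def chart_inv_def)
  have sM: "\<sigma> i < 2*n+2" if "i < N" for i using that by (auto simp: \<sigma>_def N_def)
  have tM: "\<tau> i < 2*n+2" if "i < N" for i using that by (auto simp: \<tau>_def N_def)
  have yk: "y k = (\<Sum>m = 0..<Suc N. g $$ (k,m) * z m)" if "k < Suc N" for k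
    using that by (simp add: y_def lin_act_def N_def lessThan_atLeast0)
  define F where "F = (\<lambda>v. chart n \<beta> (lin_act g (2*n+2) (chart_inv n \<alpha> v)))"
  have D: "deriv (\<lambda>t. F (w(j:=t)) i) (w j) = (g $$ (\<sigma> i, \<tau> j) * y b - y (\<sigma> i) * g $$ (b, \<tau> j)) / (y b)^2"
    if i: "i < N" and j: "j < N" for i j
  proof -
    have "(\<lambda>t. F (w(j:=t)) i) = (\<lambda>t. (y (\<sigma> i) + g $$ (\<sigma> i, \<tau> j) * (t - w j)) / (y b + g $$ (b, \<tau> j) * (t - w j)))"
    proof
      fix t
      show "F (w(j:=t)) i = (y (\<sigma> i) + g $$ (\<sigma> i, \<tau> j) * (t - w j)) / (y b + g $$ (b, \<tau> j) * (t - w j))"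
        unfolding F_def C2[OF j] C1[OF i]
        using lin_act_upd[OF sM[OF i] tM[OF j], of g z t] lin_act_upd[OF bM tM[OF j], of g z t] C3[OF j]
        by (simp add: y_def)
    qed
    then show ?thesis using deriv_frac[OF yb] by simp
  qed
  have JD: "jac_det N F w = det (mat N N (\<lambda>(i,j). (g $$ (\<sigma> i, \<tau> j) * y b - y (\<sigma> i) * g $$ (b, \<tau> j)) / (y b)^2))"
    unfolding jac_det_def
    by (rule arg_cong[where f=det], rule eq_matI) (auto simp: D)
  have core_app: "cmod (jac_det N F w) = 1 / cmod (y b) ^ Suc N"
    unfolding JD
  proof (rule core[where z=z and a="n+\<alpha>"])
    show "g \<in> carrier_mat (Suc N) (Suc N)" using g by (simp add: N_def)
    show "det g = 1" by (rule dg)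
    show "\<forall>i<N. \<sigma> i < Suc N" using sM by (simp add: N_def)
    show "inj_on \<sigma> {..<N}" by (auto simp: inj_on_def \<sigma>_def split: if_splits)
    show "\<forall>i<N. \<sigma> i \<noteq> b" by (auto simp: \<sigma>_def b_def)
    show "b < Suc N" using bM by (simp add: N_def)
    show "\<forall>i<N. \<tau> i < Suc N" using tM by (simp add: N_def)
    show "inj_on \<tau> {..<N}" by (auto simp: inj_on_def \<tau>_def split: if_splits)
    show "\<forall>i<N. \<tau> i \<noteq> n + \<alpha>" by (auto simp: \<tau>_def)
    show "n + \<alpha> < Suc N" using al by (simp add: N_def)
    show "z (n + \<alpha>) = 1" by (rule C4)
    show "\<And>k. k < Suc N \<Longrightarrow> y k = (\<Sum>m = 0..<Suc N. g $$ (k, m) * z m)" by (rule yk)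
    show "y b \<noteq> 0" by (rule yb)
  qed
  define B where "B = cmod (y b)"
  define Y where "Y = (\<Sum>i\<le>n. (cmod (y (n+1+i)))\<^sup>2)"
  define Z where "Z = (\<Sum>i\<le>n. (cmod (z (n+1+i)))\<^sup>2)"
  have Bpos: "B > 0" using yb by (simp add: B_def)
  have Ysplit: "Y = B^2 + (\<Sum>k\<in>{1..n}. (cmod (y (\<sigma> (n+k))))\<^sup>2)"
    unfolding Y_def B_def b_def \<sigma>_def
    by (rule reidx[OF be, of "\<lambda>m. (cmod (y m))\<^sup>2"])
  have Zsplit: "Z = 1 + (\<Sum>k\<in>{1..n}. (cmod (w (n+k)))\<^sup>2)"
  proof -
    have "Z = (cmod (z (n+\<alpha>)))\<^sup>2 + (\<Sum>k\<in>{1..n}. (cmod (z (\<tau> (n+k))))\<^sup>2)"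
      unfolding Z_def \<tau>_def by (rule reidx[OF al, of "\<lambda>m. (cmod (z m))\<^sup>2"])
    also have "(\<Sum>k\<in>{1..n}. (cmod (z (\<tau> (n+k))))\<^sup>2) = (\<Sum>k\<in>{1..n}. (cmod (w (n+k)))\<^sup>2)"
      by (rule sum.cong) (auto simp: C3 N_def)
    finally show ?thesis using C4 by simp
  qed
  have S0: "0 \<le> (\<Sum>k\<in>{1..n}. (cmod (y (\<sigma> (n+k))))\<^sup>2)" by (rule sum_nonneg) simp
  have Ypos: "Y > 0" using Ysplit S0 Bpos by (smt (verit) zero_less_power)
  have Zpos: "Z > 0" using Zsplit by (smt (verit) sum_nonneg zero_le_power2)
  have VD1: "vol_density n (chart n \<beta> y) = 1 / (Y / B^2) ^ (2*(n+1))"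
  proof -
    have "(\<Sum>k\<in>{1..n}. (cmod (chart n \<beta> y (n+k)))\<^sup>2) = (\<Sum>k\<in>{1..n}. (cmod (y (\<sigma> (n+k))))\<^sup>2 / B^2)"
      by (rule sum.cong) (auto simp: C1 N_def B_def norm_divide power_divide)
    also have "\<dots> = (Y - B^2) / B^2" using Ysplit by (simp add: sum_divide_distrib)
    finally have "1 + (\<Sum>k\<in>{1..n}. (cmod (chart n \<beta> y (n+k)))\<^sup>2) = Y / B^2"
      using Bpos by (simp add: field_simps)
    then show ?thesis by (simp add: vol_density_def)
  qed
  have VD2: "vol_density n w = 1 / Z ^ (2*(n+1))"
    using Zsplit by (simp add: vol_density_def)
  have MU: "mu n g z = sqrt Z / sqrt Y"
  proof -
    have "(\<Sum>j\<le>n. g $$ (n + 1 + i, j) * z j) + (\<Sum>j\<le>n. g $$ (n + 1 + i, n + 1 + j) * z (n + 1 + j)) = y (n+1+i)"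
      if "i \<le> n" for i
      using that split_sum[of "\<lambda>l. g $$ (n + 1 + i, l) * z l" n] by (simp add: y_def lin_act_def)
    then show ?thesis unfolding mu_def Y_def Z_def by simp
  qed
  have "vol_density n (chart n \<beta> y) * (cmod (jac_det N F w))\<^sup>2 = 1 / Y ^ (2*(n+1))"
  proof -
    have SN: "Suc N = 2*(n+1)" by (simp add: N_def)
    have PP: "(B^(2*(n+1)))^2 = (B^2)^(2*(n+1))" by (metis power_mult mult.commute)
    have "(cmod (jac_det N F w))\<^sup>2 = (1 / B^(2*(n+1)))^2"
      using core_app SN by (simp add: B_def)
    also have "\<dots> = 1 / (B^2) ^ (2*(n+1))" using PP by (simp add: power_divide)
    finally have "(cmod (jac_det N F w))\<^sup>2 = 1 / (B^2) ^ (2*(n+1))" .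
    then show ?thesis using VD1 Bpos Ypos by (simp add: power_divide)
  qed
  moreover have "(mu n g z) ^ (4*(n+1)) * vol_density n w = 1 / Y ^ (2*(n+1))"
  proof -
    have "(sqrt Z / sqrt Y) ^ (4*(n+1)) = ((sqrt Z / sqrt Y)^2) ^ (2*(n+1))"
      by (metis power_mult mult.assoc numeral_Bit0_eq_double mult_2)
    also have "\<dots> = (Z / Y) ^ (2*(n+1))" using Zpos Ypos by (simp add: power_divide)
    finally show ?thesis using MU VD2 Zpos Ypos by (simp add: power_divide)
  qed
  ultimately show ?thesis by (simp add: y_def z_def F_def N_def)
qed

end
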